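(* For $T>0$ let $\psi_T$ be the solution of the adjoint LSS problem on $[0,T]$ and define the adjoint LSS sensitivity $$S_T=\frac1T\int_0^T\big(J_s+\psi_T^Tf_s\big)\,dt,$$ and the shadowing sensitivity $S_T^\infty=\frac1T\int_0^T\big(J_s+\psi^{\infty T}f_s\big)\,dt$. Assume $\|f_s\|_\infty=\sup_t\|f_s(t)\|<\infty$ and that $\big|S_T^\infty-\frac{d\bar J}{ds}\big|=\mathcal{O}(T^{-1/2})$ as $T\to\infty$, where $\frac{d\bar J}{ds}$ is the true sensitivity (this holds e.g. for mixing systems by the central limit theorem). Then $$\Big|S_T-\frac{d\bar J}{ds}\Big|\le\frac{\|e_h\|_2\|f_s\|_\infty}{\sqrt T}+\frac{\|f_s\|_\infty\int_0^T\|e_p(t)\|\,dt}{T}+\mathcal{O}\Big(\frac1{\sqrt T}\Big),$$ where $\|e_h\|_2$ and $\int_0^T\|e_p(t)\|dt$ remain bounded as $T\to\infty$; in particular $S_T\to\frac{d\bar J}{ds}$ at the rate $\mathcal{O}(T^{-1/2})$.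
   Context: Let $X=\mathbb{R}^n$. Let $f:X\times\mathbb{R}\to X$ be $C^2$, $s$ the parameter, $u(t)$ a solution of $\frac{du}{dt}=f(u,s)$ remaining in a compact set; write $f(t)$, $f_u=\partial f/\partial u$, $f_u^*=f_u^T$, $f_s=\partial f/\partial s$ along $u(t)$. Let $J$ be a smooth output, $J_u$, $J_s$ its partial derivatives along $u(t)$, $\bar J(s)=\lim_{T\to\infty}\frac1T\int_0^TJ\,dt$ (independent of the initial condition by ergodicity), and $\frac{d\bar J}{ds}$ the true derivative, assumed to exist. Fix $\alpha^2>0$. The adjoint LSS problem on $[0,T]$: $\frac{d\psi}{dt}+f_u^*\psi+J_u=r$, $\psi(0)=\psi(T)=0$, $\frac{dr}{dt}-f_ur=\frac1{\alpha^2}(\psi^Tf+J-\bar J)f$. The adjoint shadowing direction $\psi^\infty$ is a bounded solution on $[0,\infty)$ of $\frac{d\psi^\infty}{dt}+f_u^*\psi^\infty+J_u=0$ with $\lim_{T\to\infty}\frac1T\int_0^T\psi^{\infty T}f\,dt=0$. Uniform hyperbolicity: Lyapunov exponents $\lambda_i$ with exactly one zero $\lambda_{n_0}=0$; covariant Lyapunov vectors $\phi_i$ ($\dot\phi_i=f_u\phi_i-\lambda_i\phi_i$, $\phi_{n_0}=f$) and adjoint ones $\hat\phi_i$ ($-\dot{\hat\phi}_i=f_u^*\hat\phi_i-\lambda_i\hat\phi_i$), bases of $X$, $\phi_i^T\hat\phi_j=\delta_{ij}$, $c_{\min}I\le\hat\Phi^T\hat\Phi\le c_{\max}I$ uniformly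 with $0<c_{\min}\le c_{\max}$. Error decomposition: $\psi_T-\psi^\infty=e_h+e_p$ where $e_p(t)=ae^{-t}+be^{-(T-t)}$, $a=\frac{e(0)-e^{-T}e(T)}{1-e^{-2T}}$, $b=\frac{e(T)-e^{-T}e(0)}{1-e^{-2T}}$, $e(0)=-\psi^\infty(0)$, $e(T)=-\psi^\infty(T)$, and $e_h$ vanishes at $0$ and $T$. $\|g\|_2=(\int_0^Tg^Tg\,dt)^{1/2}$, $\|g(t)\|=(g(t)^Tg(t))^{1/2}$. *)

theory Defs
  imports "HOL-Analysis.Analysis" "HOL-Library.Landau_Symbols"
begin

definition C2 :: "('a::real_normed_vector \<Rightarrow> 'b::real_normed_vector) \<Rightarrow> bool" where
  "C2 g \<longleftrightarrow> (\<exists>D D2. (\<forall>z. (g has_derivative blinfun_apply (D z)) (at z)) \<and>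
                      (\<forall>z. (D has_derivative blinfun_apply (D2 z)) (at z)) \<and>
                      continuous_on UNIV D2)"

fun dder :: "('a::real_normed_vector \<Rightarrow> real) \<Rightarrow> 'a list \<Rightarrow> 'a \<Rightarrow> real" where
  "dder g [] = g"
| "dder g (v # vs) = (\<lambda>x. frechet_derivative (dder g vs) (at x) v)"

definition smooth :: "('a::real_normed_vector \<Rightarrow> real) \<Rightarrow> bool" where
  "smooth g \<longleftrightarrow> (\<forall>vs x. dder g vs differentiable (at x))"

definition pfu :: "(real^'n \<Rightarrow> real \<Rightarrow> real^'n) \<Rightarrow> real \<Rightarrow> real^'n \<Rightarrow> real^'n^'n" where
  "pfu f s x = matrix (\<lambda>h. frechet_derivative (\<lambda>(y, p). f y p) (at (x, s)) (h, 0))"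

definition pfs :: "(real^'n \<Rightarrow> real \<Rightarrow> real^'n) \<Rightarrow> real \<Rightarrow> real^'n \<Rightarrow> real^'n" where
  "pfs f s x = frechet_derivative (\<lambda>(y, p). f y p) (at (x, s)) (0, 1)"

definition pJu :: "(real^'n \<Rightarrow> real \<Rightarrow> real) \<Rightarrow> real \<Rightarrow> real^'n \<Rightarrow> real^'n" where
  "pJu J s x = (\<chi> i. frechet_derivative (\<lambda>(y, p). J y p) (at (x, s)) (axis i 1, 0))"

definition pJs :: "(real^'n \<Rightarrow> real \<Rightarrow> real) \<Rightarrow> real \<Rightarrow> real^'n \<Rightarrow> real" where
  "pJs J s x = frechet_derivative (\<lambda>(y, p). J y p) (at (x, s)) (0, 1)"

definition eA :: "(real \<Rightarrow> real^'n) \<Rightarrow> real \<Rightarrow> real^'n" where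
  "eA psiinf T = (1 / (1 - exp (-2*T))) *\<^sub>R ((- psiinf 0) - exp (-T) *\<^sub>R (- psiinf T))"

definition eB :: "(real \<Rightarrow> real^'n) \<Rightarrow> real \<Rightarrow> real^'n" where
  "eB psiinf T = (1 / (1 - exp (-2*T))) *\<^sub>R ((- psiinf T) - exp (-T) *\<^sub>R (- psiinf 0))"

definition ep :: "(real \<Rightarrow> real^'n) \<Rightarrow> real \<Rightarrow> real \<Rightarrow> real^'n" where
  "ep psiinf T t = exp (-t) *\<^sub>R eA psiinf T + exp (-(T - t)) *\<^sub>R eB psiinf T"

definition eh :: "(real \<Rightarrow> real \<Rightarrow> real^'n) \<Rightarrow> (real \<Rightarrow> real^'n) \<Rightarrow> real \<Rightarrow> real \<Rightarrow> real^'n" where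
  "eh psiT psiinf T t = psiT T t - psiinf t - ep psiinf T t"

definition L2norm :: "real \<Rightarrow> (real \<Rightarrow> real^'n) \<Rightarrow> real" where
  "L2norm T g = sqrt (integral {0..T} (\<lambda>t. g t \<bullet> g t))"

end

theory Submission
  imports Defs
begin

lemma int_sq_le:
  fixes g :: "real \<Rightarrow> real"
  assumes ab: "a \<le> b" and cg: "continuous_on {a..b} g"
  shows "(integral {a..b} g)^2 \<le> (b - a) * integral {a..b} (\<lambda>x. (g x)^2)"
proof (cases "a = b")
  case True then show ?thesis by simp
next
  case False
  with ab have ba: "b - a > 0" by simp
  define I where "I = integral {a..b} g"
  define G where "G = integral {a..b} (\<lambda>x. (g x)^2)"
  define m where "m = I / (b - a)"
  have hI: "(g has_integral I) {a..b}" unfolding I_def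
    using cg by (intro integrable_integral integrable_continuous_interval)
  have c2: "continuous_on {a..b} (\<lambda>x. (g x)^2)" using cg by (intro continuous_intros)
  have hG: "((\<lambda>x. (g x)^2) has_integral G) {a..b}" unfolding G_def
    using c2 by (intro integrable_integral integrable_continuous_interval)
  have hc: "((\<lambda>x. m^2) has_integral (m^2 * (b - a))) {a..b}"
    using has_integral_const_real[of "m^2" a b] ab by (simp add: mult.commute)
  have "((\<lambda>x. (g x)^2 - (2*m) * g x + m^2) has_integral (G - (2*m)*I + m^2*(b-a))) {a..b}"
    by (intro has_integral_add has_integral_diff has_integral_mult_right hG hI hc)
  moreover have "\<And>x. (g x)^2 - (2*m) * g x + m^2 = (g x - m)^2"
    by (simp add: power2_eq_square algebra_simps)
  ultimately have h: "((\<lambda>x. (g x - m)^2) has_integral (G - (2*m)*I + m^2*(b-a))) {a..b}"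
    by simp
  have "0 \<le> G - (2*m)*I + m^2*(b-a)"
    by (rule has_integral_nonneg[OF h]) simp
  also have "G - (2*m)*I + m^2*(b-a) = G - I^2/(b-a)"
  proof -
    have "m^2*(b-a) = I^2/(b-a)" "(2*m)*I = 2*(I^2/(b-a))" using ba unfolding m_def
      by (simp_all add: power2_eq_square)
    then show ?thesis by simp
  qed
  finally have "I^2/(b-a) \<le> G" by simp
  then show ?thesis unfolding I_def[symmetric] G_def[symmetric]
    using ba by (simp add: field_simps)
qed

lemma endpoint_bound:
  fixes r r' :: "real \<Rightarrow> 'a::banach"
  assumes ab: "a \<le> b"
    and dr: "\<And>t. t \<in> {a..b} \<Longrightarrow> (r has_vector_derivative r' t) (at t within {a..b})"
    and cg: "continuous_on {a..b} g" and gb: "\<And>t. t \<in> {a..b} \<Longrightarrow> norm (r' t) \<le> g t"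
  shows "(b - a) * norm (r a) \<le> integral {a..b} (\<lambda>t. norm (r t)) + (b - a) * integral {a..b} g"
    and "(b - a) * norm (r b) \<le> integral {a..b} (\<lambda>t. norm (r t)) + (b - a) * integral {a..b} g"
proof -
  have cr: "continuous_on {a..b} r" by (rule continuous_on_vector_derivative) (use dr in auto)
  have cnr: "continuous_on {a..b} (\<lambda>t. norm (r t))" using cr by (intro continuous_intros)
  have gnn: "\<And>t. t \<in> {a..b} \<Longrightarrow> 0 \<le> g t" using gb norm_ge_zero order_trans by blast
  have gint: "\<And>c d. {c..d} \<subseteq> {a..b} \<Longrightarrow> g integrable_on {c..d}"
    using cg by (meson continuous_on_subset integrable_continuous_interval)
  let ?G = "integral {a..b} g"
  have L: "norm (r a) \<le> norm (r t) + ?G" if t: "t \<in> {a..b}" for t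
  proof -
    have "(r' has_integral (r t - r a)) {a..t}"
      apply (rule fundamental_theorem_of_calculus)
      using t apply simp
      apply (rule has_vector_derivative_within_subset[OF dr]) using t by auto
    then have e: "r t - r a = integral {a..t} r'" and ii: "r' integrable_on {a..t}"
      by (auto simp: integral_unique has_integral_integrable)
    have "norm (r t - r a) \<le> integral {a..t} g"
      unfolding e by (rule integral_norm_bound_integral[OF ii gint]) (use t gb in auto)
    also have "\<dots> \<le> ?G"
      by (rule integral_subset_le) (use t gint gnn in auto)
    finally show ?thesis using norm_triangle_ineq2[of "r a" "r t"] norm_triangle_ineq2[of "r b" "r t"] norm_minus_commute[of "r a" "r t"] by linarith
  qed
  have R: "norm (r b) \<le> norm (r t) + ?G" if t: "t \<in> {a..b}" for t
  proof -
    have "(r' has_integral (r b - r t)) {t..b}"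
      apply (rule fundamental_theorem_of_calculus)
      using t apply simp
      apply (rule has_vector_derivative_within_subset[OF dr]) using t by auto
    then have e: "r b - r t = integral {t..b} r'" and ii: "r' integrable_on {t..b}"
      by (auto simp: integral_unique has_integral_integrable)
    have "norm (r b - r t) \<le> integral {t..b} g"
      unfolding e by (rule integral_norm_bound_integral[OF ii gint]) (use t gb in auto)
    also have "\<dots> \<le> ?G"
      by (rule integral_subset_le) (use t gint gnn in auto)
    finally show ?thesis using norm_triangle_ineq2[of "r a" "r t"] norm_triangle_ineq2[of "r b" "r t"] norm_minus_commute[of "r a" "r t"] by linarith
  qed
  have i1: "(\<lambda>t. norm (r t) + ?G) integrable_on {a..b}"
    using cr by (intro integrable_continuous_interval continuous_intros)
  have i2: "integral {a..b} (\<lambda>t. norm (r t) + ?G) = integral {a..b} (\<lambda>t. norm (r t)) + (b - a) * ?G"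
  proof -
    have "(\<lambda>t. norm (r t)) integrable_on {a..b}" using cnr by (rule integrable_continuous_interval)
    then show ?thesis using ab by (subst integral_add) auto
  qed
  have "integral {a..b} (\<lambda>t. norm (r a)) \<le> integral {a..b} (\<lambda>t. norm (r t) + ?G)"
    by (rule integral_le[OF _ i1]) (use L in auto)
  then show "(b - a) * norm (r a) \<le> integral {a..b} (\<lambda>t. norm (r t)) + (b - a) * ?G"
    using ab i2 by simp
  have "integral {a..b} (\<lambda>t. norm (r b)) \<le> integral {a..b} (\<lambda>t. norm (r t) + ?G)"
    by (rule integral_le[OF _ i1]) (use R in auto)
  then show "(b - a) * norm (r b) \<le> integral {a..b} (\<lambda>t. norm (r t)) + (b - a) * ?G"
    using ab i2 by simp
qed

lemma scalar_decay:
  fixes c \<rho> :: "real \<Rightarrow> real"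
  assumes T: "0 \<le> T"
    and dc: "\<And>t. t \<in> {0..T} \<Longrightarrow> (c has_vector_derivative (\<rho> t - l * c t)) (at t within {0..T})"
    and c\<rho>: "continuous_on {0..T} \<rho>" and l: "l \<noteq> 0"
  shows "\<bar>l\<bar> * integral {0..T} (\<lambda>t. (c t)^2) \<le> (c 0)^2 + (c T)^2 + integral {0..T} (\<lambda>t. (\<rho> t)^2) / \<bar>l\<bar>"
proof -
  have cc: "continuous_on {0..T} c" by (rule continuous_on_vector_derivative) (use dc in auto)
  have d2: "((\<lambda>t. (c t)^2) has_vector_derivative (2 * c t * (\<rho> t - l * c t))) (at t within {0..T})"
    if "t \<in> {0..T}" for t
  proof -
    have "((\<lambda>t. c t * c t) has_vector_derivative (c t * (\<rho> t - l * c t) + (\<rho> t - l * c t) * c t)) (at t within {0..T})"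
      using dc[OF that] dc[OF that] by (rule has_vector_derivative_mult)
    then show ?thesis by (simp add: power2_eq_square algebra_simps)
  qed
  have "((\<lambda>t. 2 * c t * (\<rho> t - l * c t)) has_integral ((c T)^2 - (c 0)^2)) {0..T}"
    by (rule fundamental_theorem_of_calculus[OF T]) (use d2 in auto)
  then have E: "integral {0..T} (\<lambda>t. 2 * c t * (\<rho> t - l * c t)) = (c T)^2 - (c 0)^2"
    by (rule integral_unique)
  define P where "P = integral {0..T} (\<lambda>t. c t * \<rho> t)"
  define C where "C = integral {0..T} (\<lambda>t. (c t)^2)"
  define R where "R = integral {0..T} (\<lambda>t. (\<rho> t)^2)"
  have ip: "(\<lambda>t. c t * \<rho> t) integrable_on {0..T}" using cc c\<rho> by (intro integrable_continuous_interval continuous_intros)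
  have ic: "(\<lambda>t. (c t)^2) integrable_on {0..T}" using cc by (intro integrable_continuous_interval continuous_intros)
  have ir: "(\<lambda>t. (\<rho> t)^2) integrable_on {0..T}" using c\<rho> by (intro integrable_continuous_interval continuous_intros)
  have "integral {0..T} (\<lambda>t. 2 * c t * (\<rho> t - l * c t)) = integral {0..T} (\<lambda>t. 2 * (c t * \<rho> t) - (2 * l) * (c t)^2)"
    by (rule integral_cong) (simp add: algebra_simps power2_eq_square)
  also have "\<dots> = 2 * P - 2 * l * C" unfolding P_def C_def
    using ip ic by (subst integral_diff) (auto intro: integrable_on_mult_right)
  finally have E2: "2 * P - 2 * l * C = (c T)^2 - (c 0)^2" using E by simp
  have pw: "\<bar>2 * (c t * \<rho> t)\<bar> \<le> \<bar>l\<bar> * (c t)^2 + (\<rho> t)^2 / \<bar>l\<bar>" for t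
  proof -
    have "0 \<le> (\<bar>l\<bar> * \<bar>c t\<bar> - \<bar>\<rho> t\<bar>)^2" by simp
    then have "\<bar>l\<bar> * \<bar>2 * (c t * \<rho> t)\<bar> \<le> \<bar>l\<bar> * (\<bar>l\<bar> * (c t)^2 + (\<rho> t)^2 / \<bar>l\<bar>)"
      using l by (simp add: power2_eq_square algebra_simps abs_mult)
    then show ?thesis using l by simp
  qed
  have iq: "(\<lambda>t. \<bar>l\<bar> * (c t)^2 + (\<rho> t)^2 / \<bar>l\<bar>) integrable_on {0..T}"
    using cc c\<rho> l by (intro integrable_continuous_interval continuous_intros) auto
  have q: "integral {0..T} (\<lambda>t. \<bar>l\<bar> * (c t)^2 + (\<rho> t)^2 / \<bar>l\<bar>) = \<bar>l\<bar> * C + R / \<bar>l\<bar>"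
    unfolding C_def R_def using ic ir
    by (subst integral_add) (auto intro: integrable_on_mult_right integrable_on_mult_left simp: divide_inverse)
  have "integral {0..T} (\<lambda>t. 2 * (c t * \<rho> t)) \<le> \<bar>l\<bar> * C + R / \<bar>l\<bar>"
    unfolding q[symmetric] by (rule integral_le) (use ip iq pw abs_le_D1 in auto)
  then have P1: "2 * P \<le> \<bar>l\<bar> * C + R / \<bar>l\<bar>" unfolding P_def by simp
  have "integral {0..T} (\<lambda>t. - (2 * (c t * \<rho> t))) \<le> \<bar>l\<bar> * C + R / \<bar>l\<bar>"
    unfolding q[symmetric] by (rule integral_le) (use ip iq pw abs_le_D2 in \<open>auto intro: integrable_neg integrable_on_mult_right\<close>)
  then have P2: "- (2 * P) \<le> \<bar>l\<bar> * C + R / \<bar>l\<bar>" unfolding P_def by (simp add: integral_neg ip)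
  have c0: "0 \<le> (c 0)^2" "0 \<le> (c T)^2" by simp_all
  show ?thesis unfolding C_def[symmetric] R_def[symmetric]
  proof (cases "l > 0")
    case True
    then show "\<bar>l\<bar> * C \<le> (c 0)\<^sup>2 + (c T)\<^sup>2 + R / \<bar>l\<bar>" using E2 P1 zero_le_power2[of "c T"] zero_le_power2[of "c 0"] by (simp only: abs_of_pos[OF True])
  next
    case False
    then have "l < 0" using l by simp
    then show "\<bar>l\<bar> * C \<le> (c 0)\<^sup>2 + (c T)\<^sup>2 + R / \<bar>l\<bar>" using E2 P2 zero_le_power2[of "c T"] zero_le_power2[of "c 0"] by (simp only: abs_of_neg[OF `l < 0`])
  qed
qed

lemma biorth_expand:
  fixes p q :: "'n::finite \<Rightarrow> real^'n"
  assumes bo: "\<And>i j. p i \<bullet> q j = (if i = j then 1 else 0)"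
  shows "x = (\<Sum>j\<in>UNIV. (x \<bullet> p j) *\<^sub>R q j)"
proof -
  define Q :: "real^'n^'n" where "Q = (\<chi> i j. q j $ i)"
  define P :: "real^'n^'n" where "P = (\<chi> i j. p j $ i)"
  have "transpose P ** Q = mat 1"
    by (simp add: Q_def P_def matrix_matrix_mult_def transpose_def mat_def vec_eq_iff
        bo[unfolded inner_vec_def, symmetric])
  then have QP: "Q ** transpose P = mat 1" by (rule matrix_left_right_inverse1)
  have "x = (Q ** transpose P) *v x" by (simp add: QP)
  also have "\<dots> = Q *v (transpose P *v x)" by (simp only: matrix_vector_mul_assoc)
  also have "\<dots> = (\<Sum>j\<in>UNIV. (x \<bullet> p j) *\<^sub>R q j)"
    by (simp add: vec_eq_iff Q_def P_def matrix_vector_mult_def transpose_def inner_vec_def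
        sum_component mult.commute)
  finally show ?thesis .
qed

lemma phi_norm_bound:
  fixes p q :: "'n::finite \<Rightarrow> real^'n"
  assumes bo: "\<And>i j. p i \<bullet> q j = (if i = j then 1 else 0)"
    and gl: "\<And>v. cmin * (v \<bullet> v) \<le> (\<Sum>i\<in>UNIV. v $ i *\<^sub>R q i) \<bullet> (\<Sum>i\<in>UNIV. v $ i *\<^sub>R q i)"
    and cm: "0 < cmin"
  shows "p i \<bullet> p i \<le> 1 / cmin"
proof -
  define v where "v = (\<chi> j. p i \<bullet> p j)"
  have "(\<Sum>j\<in>UNIV. v $ j *\<^sub>R q j) = p i"
    using biorth_expand[OF bo, of "p i"] by (simp add: v_def inner_commute)
  then have A: "cmin * (v \<bullet> v) \<le> p i \<bullet> p i" using gl[of v] by simp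
  have "(p i \<bullet> p i)^2 \<le> (\<Sum>j\<in>UNIV. (v $ j)^2)"
  proof -
    have "(v $ i)^2 \<le> (\<Sum>j\<in>UNIV. (v $ j)^2)" by (rule member_le_sum) auto
    then show ?thesis by (simp add: v_def)
  qed
  also have "\<dots> = v \<bullet> v" by (simp add: inner_vec_def power2_eq_square)
  finally have B: "(p i \<bullet> p i)^2 \<le> v \<bullet> v" .
  define a where "a = p i \<bullet> p i"
  have a0: "0 \<le> a" unfolding a_def by simp
  have "cmin * a^2 \<le> a" using A B cm unfolding a_def[symmetric]
    by (meson mult_left_mono order_trans less_imp_le)
  then show ?thesis unfolding a_def[symmetric] using a0 cm
    by (cases "a = 0") (auto simp: power2_eq_square field_simps)
qed

lemma gram_upper_use:
  fixes p q :: "'n::finite \<Rightarrow> real^'n"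
  assumes bo: "\<And>i j. p i \<bullet> q j = (if i = j then 1 else 0)"
    and gu: "\<And>v. (\<Sum>i\<in>UNIV. v $ i *\<^sub>R q i) \<bullet> (\<Sum>i\<in>UNIV. v $ i *\<^sub>R q i) \<le> cmax * (v \<bullet> v)"
  shows "x \<bullet> x \<le> cmax * (\<Sum>j\<in>UNIV. (x \<bullet> p j)^2)"
proof -
  define v where "v = (\<chi> j. x \<bullet> p j)"
  have "(\<Sum>j\<in>UNIV. v $ j *\<^sub>R q j) = x"
    using biorth_expand[OF bo, of x] by (simp add: v_def)
  then have "x \<bullet> x \<le> cmax * (v \<bullet> v)" using gu[of v] by simp
  also have "v \<bullet> v = (\<Sum>j\<in>UNIV. (x \<bullet> p j)^2)" by (simp add: v_def inner_vec_def power2_eq_square)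
  finally show ?thesis .
qed

lemma sub_sqrt:
  fixes g :: "real \<Rightarrow> real"
  assumes sub: "{a..a+1} \<subseteq> {0..T}" and cg: "continuous_on {0..T} g"
  shows "integral {a..a+1} (\<lambda>t. \<bar>g t\<bar>) \<le> sqrt (integral {0..T} (\<lambda>t. (g t)^2))"
proof -
  have cg': "continuous_on {a..a+1} g" using cg sub continuous_on_subset by blast
  have "(integral {a..a+1} (\<lambda>t. \<bar>g t\<bar>))^2 \<le> (a + 1 - a) * integral {a..a+1} (\<lambda>t. \<bar>g t\<bar>^2)"
    by (rule int_sq_le) (use cg' in \<open>auto intro: continuous_intros\<close>)
  also have "\<dots> = integral {a..a+1} (\<lambda>t. (g t)^2)" by simp
  also have "\<dots> \<le> integral {0..T} (\<lambda>t. (g t)^2)"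
    apply (rule integral_subset_le[OF sub])
    using cg' cg by (auto intro!: integrable_continuous_interval continuous_intros)
  finally have h: "(integral {a..a+1} (\<lambda>t. \<bar>g t\<bar>))^2 \<le> integral {0..T} (\<lambda>t. (g t)^2)" .
  have "0 \<le> integral {a..a+1} (\<lambda>t. \<bar>g t\<bar>)"
    by (rule integral_nonneg) (use cg' in \<open>auto intro!: integrable_continuous_interval continuous_intros\<close>)
  then show ?thesis using h real_le_rsqrt by blast
qed

definition QB :: "real \<Rightarrow> real \<Rightarrow> real \<Rightarrow> real \<Rightarrow> real" where
  "QB M L al cmin = (2 * M * (1 + L + sqrt (1 / cmin) / al) / min 1 (1 / al))^2"

lemma core_bound:
  fixes w r :: "real \<Rightarrow> real^'n" and A :: "real \<Rightarrow> real^'n^'n"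
    and p q :: "'n \<Rightarrow> real \<Rightarrow> real^'n" and lam :: "'n \<Rightarrow> real" and n0 :: 'n
  assumes T: "1 \<le> T"
    and dw: "\<And>t. t \<in> {0..T} \<Longrightarrow> (w has_vector_derivative (r t - transpose (A t) *v w t)) (at t within {0..T})"
    and dr: "\<And>t. t \<in> {0..T} \<Longrightarrow> (r has_vector_derivative
               (A t *v r t + ((1 / al) * (w t \<bullet> p n0 t)) *\<^sub>R p n0 t)) (at t within {0..T})"
    and AL: "\<And>t v. t \<in> {0..T} \<Longrightarrow> norm (A t *v v) \<le> L * norm v"
    and dp: "\<And>i t. t \<in> {0..T} \<Longrightarrow> (p i has_vector_derivative (A t *v p i t - lam i *\<^sub>R p i t)) (at t within {0..T})"
    and lam: "\<And>i. i \<noteq> n0 \<Longrightarrow> lam i \<noteq> 0"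
    and bo: "\<And>i j t. t \<in> {0..T} \<Longrightarrow> p i t \<bullet> q j t = (if i = j then 1 else 0)"
    and gl: "\<And>t v. t \<in> {0..T} \<Longrightarrow> cmin * (v \<bullet> v) \<le> (\<Sum>i\<in>UNIV. v $ i *\<^sub>R q i t) \<bullet> (\<Sum>i\<in>UNIV. v $ i *\<^sub>R q i t)"
    and gu: "\<And>t v. t \<in> {0..T} \<Longrightarrow> (\<Sum>i\<in>UNIV. v $ i *\<^sub>R q i t) \<bullet> (\<Sum>i\<in>UNIV. v $ i *\<^sub>R q i t) \<le> cmax * (v \<bullet> v)"
    and cm: "0 < cmin" and cmc: "cmin \<le> cmax" and al: "0 < al" and L: "0 \<le> L"
    and M0: "norm (w 0) \<le> M" and MT: "norm (w T) \<le> M"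
  shows "integral {0..T} (\<lambda>t. w t \<bullet> w t) \<le> cmax * (\<Sum>i\<in>UNIV. if i = n0 then QB M L al cmin
            else (2 * M^2 / cmin + QB M L al cmin / (cmin * \<bar>lam i\<bar>)) / \<bar>lam i\<bar>)"
proof -
  define Fb where "Fb = sqrt (1 / cmin)"
  define K where "K = 1 + L + Fb / al"
  define m where "m = min 1 (1 / al)"
  define Q0 where "Q0 = QB M L al cmin"
  have Q0: "Q0 = (2 * M * K / m)^2" unfolding Q0_def QB_def K_def Fb_def m_def by simp
  have T0: "0 \<le> T" using T by simp
  have cw: "continuous_on {0..T} w" by (rule continuous_on_vector_derivative) (use dw in auto)
  have cr: "continuous_on {0..T} r" by (rule continuous_on_vector_derivative) (use dr in auto)
  have cp: "continuous_on {0..T} (p i)" for i by (rule continuous_on_vector_derivative) (use dp in auto)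
  have pb: "p i t \<bullet> p i t \<le> 1 / cmin" if "t \<in> {0..T}" for i t
    by (rule phi_norm_bound[where q = "\<lambda>j. q j t"]) (use bo gl cm that in auto)
  have pn: "norm (p i t) \<le> Fb" if "t \<in> {0..T}" for i t
    unfolding Fb_def norm_eq_sqrt_inner using pb[OF that] by (simp add: real_sqrt_le_mono)
  have M: "0 \<le> M" using M0 norm_ge_zero order_trans by blast
  define c where "c = (\<lambda>t. w t \<bullet> p n0 t)"
  have cc: "continuous_on {0..T} c" unfolding c_def using cw cp by (intro continuous_intros)
  define Rr where "Rr = integral {0..T} (\<lambda>t. r t \<bullet> r t)"
  define Cc where "Cc = integral {0..T} (\<lambda>t. (c t)^2)"
  have irr: "(\<lambda>t. r t \<bullet> r t) integrable_on {0..T}" using cr by (intro integrable_continuous_interval continuous_intros)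
  have icc: "(\<lambda>t. (c t)^2) integrable_on {0..T}" using cc by (intro integrable_continuous_interval continuous_intros)
  have Rr0: "0 \<le> Rr" unfolding Rr_def by (rule integral_nonneg[OF irr]) simp
  have Cc0: "0 \<le> Cc" unfolding Cc_def by (rule integral_nonneg[OF icc]) simp
  have de: "((\<lambda>t. w t \<bullet> r t) has_vector_derivative (r t \<bullet> r t + (1 / al) * (c t)^2)) (at t within {0..T})"
    if t: "t \<in> {0..T}" for t
  proof -
    have "((\<lambda>t. w t \<bullet> r t) has_vector_derivative
        (w t \<bullet> (A t *v r t + ((1 / al) * (w t \<bullet> p n0 t)) *\<^sub>R p n0 t) + (r t - transpose (A t) *v w t) \<bullet> r t))
        (at t within {0..T})"
      by (rule bounded_bilinear.has_vector_derivative[OF bounded_bilinear_inner dw[OF t] dr[OF t]])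
    moreover have "(transpose (A t) *v w t) \<bullet> r t = w t \<bullet> (A t *v r t)"
      by (simp add: dot_lmul_matrix)
    ultimately show ?thesis
      by (simp add: c_def inner_add_right inner_diff_left inner_diff_right power2_eq_square inner_commute add.commute)
  qed
  have "((\<lambda>t. r t \<bullet> r t + (1 / al) * (c t)^2) has_integral (w T \<bullet> r T - w 0 \<bullet> r 0)) {0..T}"
    by (rule fundamental_theorem_of_calculus[OF T0]) (use de in auto)
  then have "integral {0..T} (\<lambda>t. r t \<bullet> r t + (1 / al) * (c t)^2) = w T \<bullet> r T - w 0 \<bullet> r 0"
    by (rule integral_unique)
  moreover have "integral {0..T} (\<lambda>t. r t \<bullet> r t + (1 / al) * (c t)^2) = Rr + (1 / al) * Cc"
    unfolding Rr_def Cc_def using irr icc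
    by (subst integral_add) (auto intro: integrable_on_mult_right simp: divide_inverse)
  ultimately have E: "Rr + (1 / al) * Cc = w T \<bullet> r T - w 0 \<bullet> r 0" by simp
  have Fb0: "0 \<le> Fb" unfolding Fb_def using cm by simp
  have endp: "norm (r a) \<le> K * sqrt (Rr + Cc) \<and> norm (r (a+1)) \<le> K * sqrt (Rr + Cc)"
    if sub: "{a..a+1} \<subseteq> {0..T}" for a
  proof -
    define g where "g = (\<lambda>t. L * norm (r t) + (Fb / al) * \<bar>c t\<bar>)"
    have cr': "continuous_on {a..a+1} r" using cr sub continuous_on_subset by blast
    have cc': "continuous_on {a..a+1} c" using cc sub continuous_on_subset by blast
    have cg: "continuous_on {a..a+1} g" unfolding g_def using cr' cc' by (intro continuous_intros)
    have drs: "(r has_vector_derivative (A t *v r t + ((1 / al) * (w t \<bullet> p n0 t)) *\<^sub>R p n0 t)) (at t within {a..a+1})"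
      if "t \<in> {a..a+1}" for t
      by (rule has_vector_derivative_within_subset[OF dr sub]) (use that sub in auto)
    have gb: "norm (A t *v r t + ((1 / al) * (w t \<bullet> p n0 t)) *\<^sub>R p n0 t) \<le> g t"
      if t: "t \<in> {a..a+1}" for t
    proof -
      have t': "t \<in> {0..T}" using t sub by auto
      have "norm (A t *v r t + ((1 / al) * (w t \<bullet> p n0 t)) *\<^sub>R p n0 t)
          \<le> norm (A t *v r t) + norm (((1 / al) * c t) *\<^sub>R p n0 t)"
        unfolding c_def by (rule norm_triangle_ineq)
      also have "\<dots> \<le> L * norm (r t) + (Fb / al) * \<bar>c t\<bar>"
      proof (rule add_mono)
        show "norm (A t *v r t) \<le> L * norm (r t)" by (rule AL[OF t'])
        have "norm (((1 / al) * c t) *\<^sub>R p n0 t) = (1 / al) * \<bar>c t\<bar> * norm (p n0 t)"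
          using al by (simp add: abs_mult)
        also have "\<dots> \<le> (1 / al) * \<bar>c t\<bar> * Fb"
          by (rule mult_left_mono[OF pn[OF t']]) (use al in simp)
        finally show "norm (((1 / al) * c t) *\<^sub>R p n0 t) \<le> (Fb / al) * \<bar>c t\<bar>" by (simp add: mult.commute)
      qed
      finally show ?thesis unfolding g_def .
    qed
    have eb: "(a + 1 - a) * norm (r a) \<le> integral {a..a+1} (\<lambda>t. norm (r t)) + (a + 1 - a) * integral {a..a+1} g"
         "(a + 1 - a) * norm (r (a+1)) \<le> integral {a..a+1} (\<lambda>t. norm (r t)) + (a + 1 - a) * integral {a..a+1} g"
      using endpoint_bound[of a "a+1" r, OF _ drs cg gb] by auto
    have ir: "(\<lambda>t. norm (r t)) integrable_on {a..a+1}" using cr' by (intro integrable_continuous_interval continuous_intros)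
    have ic: "(\<lambda>t. \<bar>c t\<bar>) integrable_on {a..a+1}" using cc' by (intro integrable_continuous_interval continuous_intros)
    have ig: "integral {a..a+1} g = L * integral {a..a+1} (\<lambda>t. norm (r t)) + (Fb / al) * integral {a..a+1} (\<lambda>t. \<bar>c t\<bar>)"
      unfolding g_def using cr' cc' al by (subst integral_add) (auto intro!: integrable_continuous_interval continuous_intros)
    have s1: "integral {a..a+1} (\<lambda>t. norm (r t)) \<le> sqrt Rr"
    proof -
      have "integral {a..a+1} (\<lambda>t. \<bar>norm (r t)\<bar>) \<le> sqrt (integral {0..T} (\<lambda>t. (norm (r t))^2))"
        by (rule sub_sqrt[OF sub]) (use cr in \<open>auto intro: continuous_intros\<close>)
      then show ?thesis unfolding Rr_def by (simp add: power2_norm_eq_inner)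
    qed
    have s2: "integral {a..a+1} (\<lambda>t. \<bar>c t\<bar>) \<le> sqrt Cc"
      unfolding Cc_def by (rule sub_sqrt[OF sub cc])
    have q1: "sqrt Rr \<le> sqrt (Rr + Cc)" "sqrt Cc \<le> sqrt (Rr + Cc)" using Rr0 Cc0 by auto
    have "integral {a..a+1} (\<lambda>t. norm (r t)) + integral {a..a+1} g
        = (1 + L) * integral {a..a+1} (\<lambda>t. norm (r t)) + (Fb / al) * integral {a..a+1} (\<lambda>t. \<bar>c t\<bar>)"
      unfolding ig by (simp add: algebra_simps)
    also have "\<dots> \<le> (1 + L) * sqrt (Rr + Cc) + (Fb / al) * sqrt (Rr + Cc)"
      apply (rule add_mono; rule mult_left_mono)
      using order_trans[OF s1 q1(1)] order_trans[OF s2 q1(2)] L Fb0 al by auto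
    also have "\<dots> = K * sqrt (Rr + Cc)" unfolding K_def by (simp add: algebra_simps)
    finally have "integral {a..a+1} (\<lambda>t. norm (r t)) + integral {a..a+1} g \<le> K * sqrt (Rr + Cc)" .
    then show ?thesis using eb by simp
  qed
  define Q where "Q = Rr + Cc"
  have Q0': "0 \<le> Q" unfolding Q_def using Rr0 Cc0 by simp
  have r0: "norm (r 0) \<le> K * sqrt Q" using endp[of 0] T unfolding Q_def by auto
  have rT: "norm (r T) \<le> K * sqrt Q" using endp[of "T - 1"] T unfolding Q_def by auto
  have K0: "0 \<le> K" unfolding K_def using L Fb0 al by simp
  have "w T \<bullet> r T - w 0 \<bullet> r 0 \<le> norm (w T) * norm (r T) + norm (w 0) * norm (r 0)"
    using norm_cauchy_schwarz[of "w T" "r T"] norm_cauchy_schwarz[of "- w 0" "r 0"] by simp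
  also have "\<dots> \<le> M * (K * sqrt Q) + M * (K * sqrt Q)"
    by (intro add_mono mult_mono) (use MT M0 rT r0 M in auto)
  finally have Eb: "Rr + (1 / al) * Cc \<le> 2 * M * K * sqrt Q" using E by (simp add: mult_ac)
  have m0: "0 < m" unfolding m_def using al by simp
  have "m * Q \<le> Rr + (1 / al) * Cc" unfolding Q_def distrib_left
  proof (rule add_mono)
    show "m * Rr \<le> Rr" using Rr0 mult_right_mono[of m 1 Rr] unfolding m_def by simp
    show "m * Cc \<le> 1 / al * Cc" using Cc0 mult_right_mono[of m "1/al" Cc] unfolding m_def by simp
  qed
  with Eb have mQ: "m * Q \<le> 2 * M * K * sqrt Q" by linarith
  have QQ: "Q \<le> Q0"
  proof (cases "Q = 0")
    case True then show ?thesis unfolding Q0 by simp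
  next
    case False
    then have sq: "0 < sqrt Q" using Q0' by simp
    have "m * sqrt Q * sqrt Q \<le> (2 * M * K) * sqrt Q" using mQ Q0' by (simp add: mult.assoc)
    then have "m * sqrt Q \<le> 2 * M * K" using sq by simp
    then have "sqrt Q \<le> 2 * M * K / m" using m0 by (simp add: field_simps)
    then have "(sqrt Q)^2 \<le> (2 * M * K / m)^2" by (rule power_mono) (use Q0' in simp)
    then show ?thesis unfolding Q0 using Q0' by simp
  qed
  have RrB: "Rr \<le> Q0" and CcB: "Cc \<le> Q0" using QQ Rr0 Cc0 unfolding Q_def by auto
  define Bnd where "Bnd = (\<lambda>i. if i = n0 then Q0
            else (2 * M^2 / cmin + Q0 / (cmin * \<bar>lam i\<bar>)) / \<bar>lam i\<bar>)"
  have ciB: "integral {0..T} (\<lambda>t. (w t \<bullet> p i t)^2) \<le> Bnd i" for i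
  proof (cases "i = n0")
    case True
    then show ?thesis using CcB unfolding Bnd_def Cc_def c_def by simp
  next
    case False
    define l where "l = lam i"
    have l: "l \<noteq> 0" using lam[OF False] unfolding l_def .
    have dci: "((\<lambda>t. w t \<bullet> p i t) has_vector_derivative (r t \<bullet> p i t - l * (w t \<bullet> p i t))) (at t within {0..T})"
      if t: "t \<in> {0..T}" for t
    proof -
      have "((\<lambda>t. w t \<bullet> p i t) has_vector_derivative
          (w t \<bullet> (A t *v p i t - lam i *\<^sub>R p i t) + (r t - transpose (A t) *v w t) \<bullet> p i t))
          (at t within {0..T})"
        by (rule bounded_bilinear.has_vector_derivative[OF bounded_bilinear_inner dw[OF t] dp[OF t]])
      moreover have "(transpose (A t) *v w t) \<bullet> p i t = w t \<bullet> (A t *v p i t)"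
        by (simp add: dot_lmul_matrix)
      ultimately show ?thesis unfolding l_def
        by (simp add: inner_diff_right inner_diff_left algebra_simps)
    qed
    have crho: "continuous_on {0..T} (\<lambda>t. r t \<bullet> p i t)" using cr cp by (intro continuous_intros)
    have sd: "\<bar>l\<bar> * integral {0..T} (\<lambda>t. (w t \<bullet> p i t)^2) \<le> (w 0 \<bullet> p i 0)^2 + (w T \<bullet> p i T)^2
          + integral {0..T} (\<lambda>t. (r t \<bullet> p i t)^2) / \<bar>l\<bar>"
      by (rule scalar_decay[OF T0 dci crho l])
    have bnd_end: "(w t \<bullet> p i t)^2 \<le> M^2 / cmin" if "t \<in> {0..T}" "norm (w t) \<le> M" for t
    proof -
      have "(w t \<bullet> p i t)^2 \<le> (w t \<bullet> w t) * (p i t \<bullet> p i t)" by (rule Cauchy_Schwarz_ineq)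
      also have "\<dots> \<le> M^2 * (1 / cmin)"
      proof (rule mult_mono)
        show "w t \<bullet> w t \<le> M^2" using that(2) M by (simp add: power2_norm_eq_inner[symmetric] power_mono)
      qed (use pb[OF that(1)] M in auto)
      finally show ?thesis by simp
    qed
    have e0: "(w 0 \<bullet> p i 0)^2 \<le> M^2 / cmin" by (rule bnd_end) (use M0 T0 in auto)
    have eT: "(w T \<bullet> p i T)^2 \<le> M^2 / cmin" by (rule bnd_end) (use MT T0 in auto)
    have "integral {0..T} (\<lambda>t. (r t \<bullet> p i t)^2) \<le> integral {0..T} (\<lambda>t. (r t \<bullet> r t) / cmin)"
    proof (rule integral_le)
      show "(\<lambda>t. (r t \<bullet> p i t)^2) integrable_on {0..T}" using crho cr cp by (intro integrable_continuous_interval continuous_intros)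
      show "(\<lambda>t. (r t \<bullet> r t) / cmin) integrable_on {0..T}" using cr cm by (intro integrable_continuous_interval continuous_intros) auto
      fix t assume t: "t \<in> {0..T}"
      have "(r t \<bullet> p i t)^2 \<le> (r t \<bullet> r t) * (p i t \<bullet> p i t)" by (rule Cauchy_Schwarz_ineq)
      also have "\<dots> \<le> (r t \<bullet> r t) * (1 / cmin)" by (rule mult_left_mono[OF pb[OF t]]) simp
      finally show "(r t \<bullet> p i t)^2 \<le> (r t \<bullet> r t) / cmin" by simp
    qed
    also have "\<dots> = Rr / cmin" unfolding Rr_def by simp
    also have "\<dots> \<le> Q0 / cmin" using RrB cm by (simp add: divide_right_mono)
    finally have rho: "integral {0..T} (\<lambda>t. (r t \<bullet> p i t)^2) \<le> Q0 / cmin" .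
    have la: "0 < \<bar>l\<bar>" using l by simp
    have "\<bar>l\<bar> * integral {0..T} (\<lambda>t. (w t \<bullet> p i t)^2) \<le> 2 * M^2 / cmin + Q0 / (cmin * \<bar>l\<bar>)"
    proof -
      have "integral {0..T} (\<lambda>t. (r t \<bullet> p i t)^2) / \<bar>l\<bar> \<le> (Q0 / cmin) / \<bar>l\<bar>"
        by (rule divide_right_mono[OF rho]) (use la in simp)
      moreover have "(Q0 / cmin) / \<bar>l\<bar> = Q0 / (cmin * \<bar>l\<bar>)" by simp
      ultimately show ?thesis using sd e0 eT by linarith
    qed
    then have "integral {0..T} (\<lambda>t. (w t \<bullet> p i t)^2) \<le> (2 * M^2 / cmin + Q0 / (cmin * \<bar>l\<bar>)) / \<bar>l\<bar>"
      using la by (simp add: field_simps)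
    then show ?thesis unfolding Bnd_def l_def using False by simp
  qed
  have icis: "(\<lambda>t. (w t \<bullet> p i t)^2) integrable_on {0..T}" for i
    using cw cp by (intro integrable_continuous_interval continuous_intros)
  have "integral {0..T} (\<lambda>t. w t \<bullet> w t) \<le> integral {0..T} (\<lambda>t. cmax * (\<Sum>j\<in>UNIV. (w t \<bullet> p j t)^2))"
  proof (rule integral_le)
    show "(\<lambda>t. w t \<bullet> w t) integrable_on {0..T}" using cw by (intro integrable_continuous_interval continuous_intros)
    show "(\<lambda>t. cmax * (\<Sum>j\<in>UNIV. (w t \<bullet> p j t)^2)) integrable_on {0..T}"
      using cw cp by (intro integrable_continuous_interval continuous_intros)
    fix t assume t: "t \<in> {0..T}"
    show "w t \<bullet> w t \<le> cmax * (\<Sum>j\<in>UNIV. (w t \<bullet> p j t)^2)"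
      by (rule gram_upper_use[where q = "\<lambda>j. q j t"]) (use bo gu t in auto)
  qed
  also have "\<dots> = cmax * (\<Sum>j\<in>UNIV. integral {0..T} (\<lambda>t. (w t \<bullet> p j t)^2))"
    using icis by (simp add: integral_sum)
  also have "\<dots> \<le> cmax * (\<Sum>j\<in>UNIV. Bnd j)"
  proof (rule mult_left_mono)
    show "(\<Sum>j\<in>UNIV. integral {0..T} (\<lambda>t. (w t \<bullet> p j t)^2)) \<le> (\<Sum>j\<in>UNIV. Bnd j)"
      by (rule sum_mono) (rule ciB)
    show "0 \<le> cmax" using cm cmc by simp
  qed
  finally show ?thesis unfolding Bnd_def Q0_def .
qed

lemma chain_pair:
  fixes G :: "('a::real_normed_vector \<times> real) \<Rightarrow> 'b::real_normed_vector"
  assumes G: "(G has_derivative G') (at (u t, s))"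
    and du: "(u has_vector_derivative v) (at t within S)"
  shows "((\<lambda>t. G (u t, s)) has_vector_derivative G' (v, 0)) (at t within S)"
proof -
  have p: "((\<lambda>t. (u t, s)) has_vector_derivative (v, 0)) (at t within S)"
    by (intro has_vector_derivative_Pair du has_vector_derivative_const)
  then have p': "((\<lambda>t. (u t, s)) has_derivative (\<lambda>h. h *\<^sub>R (v, 0))) (at t within S)"
    unfolding has_vector_derivative_def .
  have G': "(G has_derivative G') (at (u t, s) within (\<lambda>t. (u t, s)) ` S)"
    using G has_derivative_at_withinI by blast
  have "((G \<circ> (\<lambda>t. (u t, s))) has_derivative (G' \<circ> (\<lambda>h. h *\<^sub>R (v, 0)))) (at t within S)"
    by (rule diff_chain_within[OF p' G'])
  moreover have "linear G'" using G by (simp add: has_derivative_linear)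
  moreover have "\<And>h. G' (h *\<^sub>R v, 0) = h *\<^sub>R G' (v, 0)"
  proof -
    fix h
    show "G' (h *\<^sub>R v, 0) = h *\<^sub>R G' (v, 0)"
      using linear_scale[OF \<open>linear G'\<close>, of h "(v, 0)"] by simp
  qed
  ultimately have "((\<lambda>t. G (u t, s)) has_derivative (\<lambda>h. h *\<^sub>R G' (v, 0))) (at t within S)"
    by (simp add: o_def)
  then show ?thesis unfolding has_vector_derivative_def .
qed

lemma lin_first_comp:
  fixes \<phi> :: "(real^'n) \<times> real \<Rightarrow> real"
  assumes lin: "linear \<phi>"
  shows "\<phi> (v, 0) = (\<chi> i. \<phi> (axis i 1, 0)) \<bullet> v"
proof -
  have l2: "linear (\<lambda>h. \<phi> (h, 0))"
  proof (intro linearI)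
    fix b1 b2 :: "real^'n" and c :: real
    show "\<phi> (b1 + b2, 0) = \<phi> (b1, 0) + \<phi> (b2, 0)"
      using linear_add[OF lin, of "(b1, 0)" "(b2, 0)"] by simp
    show "\<phi> (c *\<^sub>R b1, 0) = c *\<^sub>R \<phi> (b1, 0)"
      using linear_scale[OF lin, of c "(b1, 0)"] by simp
  qed
  have "v = (\<Sum>i\<in>UNIV. v $ i *\<^sub>R axis i 1)"
    using basis_expansion[of v] by (simp add: scalar_mult_eq_scaleR)
  then have "\<phi> (v, 0) = \<phi> ((\<Sum>i\<in>UNIV. v $ i *\<^sub>R axis i 1), 0)" by simp
  also have "\<dots> = (\<Sum>i\<in>UNIV. v $ i *\<^sub>R \<phi> (axis i 1, 0))"
    using linear_sum[OF l2, of "\<lambda>i. v $ i *\<^sub>R axis i 1" UNIV] linear_scale[OF l2] by simp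
  also have "\<dots> = (\<chi> i. \<phi> (axis i 1, 0)) \<bullet> v"
    by (simp add: inner_vec_def mult.commute)
  finally show ?thesis .
qed

theorem mainTheorem9:
  fixes f :: "real^'n \<Rightarrow> real \<Rightarrow> real^'n"
    and J :: "real^'n \<Rightarrow> real \<Rightarrow> real"
    and s :: real
    and u :: "real \<Rightarrow> real^'n"
    and K :: "(real^'n) set"
    and Jbar :: real
    and Jbarfun :: "real \<Rightarrow> real"
    and dJds :: real
    and alpha2 :: real
    and lam :: "'n \<Rightarrow> real"
    and n0 :: 'n
    and phi phih :: "'n \<Rightarrow> real \<Rightarrow> real^'n"
    and cmin cmax :: real
    and psiT rT :: "real \<Rightarrow> real \<Rightarrow> real^'n"
    and psiinf :: "real \<Rightarrow> real^'n"
  defines "fu \<equiv> \<lambda>t. pfu f s (u t)"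
    and "fs \<equiv> \<lambda>t. pfs f s (u t)"
    and "ft \<equiv> \<lambda>t. f (u t) s"
    and "Jt \<equiv> \<lambda>t. J (u t) s"
    and "Ju \<equiv> \<lambda>t. pJu J s (u t)"
    and "Js \<equiv> \<lambda>t. pJs J s (u t)"
  assumes f_C2: "C2 (\<lambda>(x, p). f x p)"
    and J_smooth: "smooth (\<lambda>(x, p). J x p)"
    (* the trajectory *)
    and u_ode: "\<And>t. t \<ge> 0 \<Longrightarrow> (u has_vector_derivative f (u t) s) (at t within {0..})"
    and K_compact: "compact K"
    and u_in_K: "\<And>t. t \<ge> 0 \<Longrightarrow> u t \<in> K"
    (* long-time average and its derivative *)
    and Jbar_lim: "((\<lambda>T. (1 / T) * integral {0..T} Jt) \<longlongrightarrow> Jbar) at_top"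
    and Jbarfun_s: "Jbarfun s = Jbar"
    and Jbar_deriv: "(Jbarfun has_real_derivative dJds) (at s)"
    and alpha_pos: "alpha2 > 0"
    (* uniform hyperbolicity *)
    and lam_n0: "lam n0 = 0"
    and lam_nz: "\<And>i. i \<noteq> n0 \<Longrightarrow> lam i \<noteq> 0"
    and phi_ode: "\<And>i t. t \<ge> 0 \<Longrightarrow>
         (phi i has_vector_derivative (fu t *v phi i t - lam i *\<^sub>R phi i t)) (at t within {0..})"
    and phi_n0: "\<And>t. t \<ge> 0 \<Longrightarrow> phi n0 t = ft t"
    and phih_ode: "\<And>i t. t \<ge> 0 \<Longrightarrow>
         (phih i has_vector_derivative (- (transpose (fu t) *v phih i t) + lam i *\<^sub>R phih i t))
           (at t within {0..})"
    and biorth: "\<And>i j t. t \<ge> 0 \<Longrightarrow> phi i t \<bullet> phih j t = (if i = j then 1 else 0)"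
    and cmin_pos: "0 < cmin" and cmin_cmax: "cmin \<le> cmax"
    and gram_bounds: "\<And>t v. t \<ge> 0 \<Longrightarrow>
         cmin * (v \<bullet> v) \<le> (\<Sum>i\<in>UNIV. v $ i *\<^sub>R phih i t) \<bullet> (\<Sum>i\<in>UNIV. v $ i *\<^sub>R phih i t)
         \<and> (\<Sum>i\<in>UNIV. v $ i *\<^sub>R phih i t) \<bullet> (\<Sum>i\<in>UNIV. v $ i *\<^sub>R phih i t) \<le> cmax * (v \<bullet> v)"
    (* psiT T, rT T solve the adjoint LSS problem on [0,T] *)
    and lss_psi: "\<And>T t. T > 0 \<Longrightarrow> t \<in> {0..T} \<Longrightarrow>
         (psiT T has_vector_derivative (rT T t - transpose (fu t) *v psiT T t - Ju t)) (at t within {0..T})"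
    and lss_r: "\<And>T t. T > 0 \<Longrightarrow> t \<in> {0..T} \<Longrightarrow>
         (rT T has_vector_derivative
            (fu t *v rT T t + ((1 / alpha2) * (psiT T t \<bullet> ft t + Jt t - Jbar)) *\<^sub>R ft t))
           (at t within {0..T})"
    and lss_bc: "\<And>T. T > 0 \<Longrightarrow> psiT T 0 = 0 \<and> psiT T T = 0"
    (* adjoint shadowing direction *)
    and psiinf_bdd: "bounded (psiinf ` {0..})"
    and psiinf_ode: "\<And>t. t \<ge> 0 \<Longrightarrow>
         (psiinf has_vector_derivative (- (transpose (fu t) *v psiinf t) - Ju t)) (at t within {0..})"
    and psiinf_mean: "((\<lambda>T. (1 / T) * integral {0..T} (\<lambda>t. psiinf t \<bullet> ft t)) \<longlongrightarrow> 0) at_top"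
    (* hypotheses of the theorem *)
    and fs_bdd: "bdd_above ((\<lambda>t. norm (fs t)) ` {0..})"
    and shadow_rate: "(\<lambda>T. \<bar>(1 / T) * integral {0..T} (\<lambda>t. Js t + psiinf t \<bullet> fs t) - dJds\<bar>)
                        \<in> O[at_top](\<lambda>T. 1 / sqrt T)"
  shows "(\<exists>g. g \<in> O[at_top](\<lambda>T. 1 / sqrt T) \<and>
           (\<forall>\<^sub>F T in at_top.
              \<bar>(1 / T) * integral {0..T} (\<lambda>t. Js t + psiT T t \<bullet> fs t) - dJds\<bar>
                \<le> L2norm T (eh psiT psiinf T) * (SUP t\<in>{0..}. norm (fs t)) / sqrt T
                   + (SUP t\<in>{0..}. norm (fs t)) * integral {0..T} (\<lambda>t. norm (ep psiinf T t)) / T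
                   + g T))
       \<and> (\<exists>B. \<forall>\<^sub>F T in at_top. L2norm T (eh psiT psiinf T) \<le> B)
       \<and> (\<exists>B. \<forall>\<^sub>F T in at_top. integral {0..T} (\<lambda>t. norm (ep psiinf T t)) \<le> B)
       \<and> (\<lambda>T. \<bar>(1 / T) * integral {0..T} (\<lambda>t. Js t + psiT T t \<bullet> fs t) - dJds\<bar>)
           \<in> O[at_top](\<lambda>T. 1 / sqrt T)"
proof -
  define FF where "FF = (\<lambda>(x, p). f x p)"
  define JJ where "JJ = (\<lambda>(x, p). J x p)"
  obtain D D2 where FD: "\<And>z. (FF has_derivative blinfun_apply (D z)) (at z)"
      and DD: "\<And>z. (D has_derivative blinfun_apply (D2 z)) (at z)"
    using f_C2 unfolding C2_def FF_def by blast
  have FDe: "frechet_derivative FF (at z) = blinfun_apply (D z)" for z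
    using frechet_derivative_at[OF FD[of z]] by simp
  have Dcont: "continuous_on UNIV D"
    using DD by (meson differentiableI differentiable_imp_continuous_on differentiable_on_def
      has_derivative_at_withinI)
  have u_cont: "continuous_on {0..} u"
    by (rule continuous_on_vector_derivative) (use u_ode in auto)
  have fu_eq: "fu t *v v = D (u t, s) (v, 0)" for t v
  proof -
    have lin: "linear (\<lambda>h. blinfun_apply (D (u t, s)) (h, 0))"
    proof (intro linearI)
      fix b1 b2 :: "real^'n" and c :: real
      show "blinfun_apply (D (u t, s)) (b1 + b2, 0) = blinfun_apply (D (u t, s)) (b1, 0) + blinfun_apply (D (u t, s)) (b2, 0)"
        using blinfun.add_right[of "D (u t, s)" "(b1, 0)" "(b2, 0)"] by simp
      show "blinfun_apply (D (u t, s)) (c *\<^sub>R b1, 0) = c *\<^sub>R blinfun_apply (D (u t, s)) (b1, 0)"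
        using blinfun.scaleR_right[of "D (u t, s)" c "(b1, 0)"] by simp
    qed
    have "Vector_Spaces.linear (*s) (*s) (\<lambda>h. blinfun_apply (D (u t, s)) (h, 0))"
      using lin by (simp add: linear_def scalar_mult_eq_scaleR)
    then show ?thesis unfolding fu_def pfu_def FF_def[symmetric] FDe by (rule matrix_works)
  qed
  have fs_eq: "fs t = D (u t, s) (0, 1)" for t
    unfolding fs_def pfs_def FF_def[symmetric] FDe ..
  have ft_d: "(ft has_vector_derivative (fu t *v ft t)) (at t within {0..})" if t: "t \<ge> 0" for t
  proof -
    have "((\<lambda>t. FF (u t, s)) has_vector_derivative D (u t, s) (f (u t) s, 0)) (at t within {0..})"
      by (rule chain_pair[OF FD u_ode[OF t]])
    then show ?thesis unfolding fu_eq by (simp add: FF_def ft_def)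
  qed
  have JJd: "JJ differentiable (at z)" for z
    using J_smooth unfolding smooth_def JJ_def[symmetric] by (metis dder.simps(1))
  have JD: "(JJ has_derivative frechet_derivative JJ (at z)) (at z)" for z
    using JJd frechet_derivative_works by blast
  have Jt_d: "(Jt has_vector_derivative (Ju t \<bullet> ft t)) (at t within {0..})" if t: "t \<ge> 0" for t
  proof -
    have "((\<lambda>t. JJ (u t, s)) has_vector_derivative frechet_derivative JJ (at (u t, s)) (f (u t) s, 0)) (at t within {0..})"
      by (rule chain_pair[OF JD u_ode[OF t]])
    moreover have "frechet_derivative JJ (at (u t, s)) (f (u t) s, 0) = Ju t \<bullet> ft t"
      unfolding Ju_def pJu_def ft_def JJ_def[symmetric]
      by (rule lin_first_comp) (use JD has_derivative_linear in blast)
    ultimately show ?thesis by (simp add: JJ_def Jt_def)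
  qed
  have JJc: "continuous_on UNIV JJ"
    using JJd by (simp add: continuous_at_imp_continuous_on differentiable_imp_continuous_within)
  have dJc: "continuous_on UNIV (dder JJ [(0, 1)])"
  proof -
    have "\<And>z. dder JJ [(0, 1)] differentiable (at z)"
      using J_smooth unfolding smooth_def JJ_def[symmetric] by blast
    then show ?thesis
      by (meson continuous_at_imp_continuous_on differentiable_imp_continuous_within)
  qed
  have Js_eq: "Js t = dder JJ [(0, 1)] (u t, s)" for t
    by (simp add: Js_def pJs_def JJ_def)
  have pair_c: "continuous_on {0..T} (\<lambda>t. (u t, s))" for T
    using u_cont by (intro continuous_intros) (auto elim: continuous_on_subset)
  have Js_c: "continuous_on {0..T} Js" for T
    unfolding Js_eq using continuous_on_compose2[OF dJc pair_c] by auto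
  have Jt_c: "continuous_on {0..T} Jt" for T
    unfolding Jt_def using continuous_on_compose2[OF JJc pair_c, of T] by (simp add: JJ_def)
  have fs_c: "continuous_on {0..T} fs" for T
    unfolding fs_eq using continuous_on_compose2[OF Dcont pair_c, of T] by (intro continuous_intros) auto
  obtain L where L0: "0 \<le> L" and fuL: "\<And>t v. t \<ge> 0 \<Longrightarrow> norm (fu t *v v) \<le> L * norm v"
  proof -
    have "compact ((\<lambda>x. (x, s)) ` K)" using K_compact by (intro compact_continuous_image continuous_intros)
    then have "compact (D ` (\<lambda>x. (x, s)) ` K)"
      using Dcont continuous_on_subset compact_continuous_image by blast
    then obtain B where B: "\<And>z. z \<in> D ` (\<lambda>x. (x, s)) ` K \<Longrightarrow> norm z \<le> B"
      using compact_imp_bounded bounded_iff by metis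
    show ?thesis
    proof (rule that[of "max B 0"])
      fix t :: real and v assume t: "t \<ge> 0"
      have "norm (D (u t, s)) \<le> B" using B u_in_K[OF t] by blast
      have "norm (fu t *v v) = norm (D (u t, s) (v, 0))" by (simp add: fu_eq)
      also have "\<dots> \<le> norm (D (u t, s)) * norm (v, 0::real)"
        using norm_blinfun[of "D (u t, s)" "(v, 0)"] by simp
      also have "\<dots> \<le> max B 0 * norm v"
        using \<open>norm (D (u t, s)) \<le> B\<close> by (simp add: mult_right_mono)
      finally show "norm (fu t *v v) \<le> max B 0 * norm v" .
    qed simp
  qed
  have psiinf_c: "continuous_on {0..} psiinf"
    by (rule continuous_on_vector_derivative) (use psiinf_ode in auto)
  have ft_c: "continuous_on {0..} ft"
    by (rule continuous_on_vector_derivative) (use ft_d in auto)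
  obtain C where C: "\<And>t. t \<ge> 0 \<Longrightarrow> psiinf t \<bullet> ft t + Jt t = C"
  proof -
    have "\<exists>C. \<forall>t\<in>{0..}. psiinf t \<bullet> ft t + Jt t = C"
    proof (rule has_derivative_zero_constant)
      show "convex {0::real..}" by (rule convex_real_interval)
      fix t :: real assume "t \<in> {0..}"
      then have t: "t \<ge> 0" by simp
      have "((\<lambda>t. psiinf t \<bullet> ft t) has_vector_derivative
          (psiinf t \<bullet> (fu t *v ft t) + (- (transpose (fu t) *v psiinf t) - Ju t) \<bullet> ft t)) (at t within {0..})"
        by (rule bounded_bilinear.has_vector_derivative[OF bounded_bilinear_inner psiinf_ode[OF t] ft_d[OF t]])
      then have "((\<lambda>t. psiinf t \<bullet> ft t + Jt t) has_vector_derivative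
          (psiinf t \<bullet> (fu t *v ft t) + (- (transpose (fu t) *v psiinf t) - Ju t) \<bullet> ft t + Ju t \<bullet> ft t)) (at t within {0..})"
        by (rule has_vector_derivative_add[OF _ Jt_d[OF t]])
      moreover have "(transpose (fu t) *v psiinf t) \<bullet> ft t = psiinf t \<bullet> (fu t *v ft t)"
        by (simp add: dot_lmul_matrix)
      ultimately have "((\<lambda>t. psiinf t \<bullet> ft t + Jt t) has_vector_derivative 0) (at t within {0..})"
        by (simp add: inner_diff_left)
      then show "((\<lambda>t. psiinf t \<bullet> ft t + Jt t) has_derivative (\<lambda>h. 0)) (at t within {0..})"
        by (simp add: has_vector_derivative_def)
    qed
    then show ?thesis using that by auto
  qed
  have CJ: "C = Jbar"
  proof -
    have ev: "\<forall>\<^sub>F T in at_top. (1 / T) * integral {0..T} (\<lambda>t. psiinf t \<bullet> ft t) = C - (1 / T) * integral {0..T} Jt"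
      using eventually_gt_at_top[of "0::real"]
    proof eventually_elim
      case (elim T)
      have iJ: "Jt integrable_on {0..T}" using Jt_c by (rule integrable_continuous_interval)
      have "integral {0..T} (\<lambda>t. psiinf t \<bullet> ft t) = integral {0..T} (\<lambda>t. C - Jt t)"
        by (rule integral_cong) (use C in \<open>auto simp: algebra_simps\<close>)
      also have "\<dots> = T * C - integral {0..T} Jt"
        using iJ elim by (subst integral_diff) auto
      finally show ?case using elim by (simp add: field_simps)
    qed
    have "((\<lambda>T. C - (1 / T) * integral {0..T} Jt) \<longlongrightarrow> C - Jbar) at_top"
      by (intro tendsto_intros Jbar_lim)
    then have "((\<lambda>T. (1 / T) * integral {0..T} (\<lambda>t. psiinf t \<bullet> ft t)) \<longlongrightarrow> C - Jbar) at_top"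
      using ev by (rule Lim_transform_eventually[OF _ eventually_mono]) auto
    from tendsto_unique[OF _ this psiinf_mean] show ?thesis by simp
  qed
  obtain M where M: "\<And>t. t \<ge> 0 \<Longrightarrow> norm (psiinf t) \<le> M"
    using psiinf_bdd unfolding bounded_iff by auto
  define BW where "BW = cmax * (\<Sum>i\<in>UNIV. if i = n0 then QB M L alpha2 cmin
            else (2 * M^2 / cmin + QB M L alpha2 cmin / (cmin * \<bar>lam i\<bar>)) / \<bar>lam i\<bar>)"
  have Wb: "integral {0..T} (\<lambda>t. (psiT T t - psiinf t) \<bullet> (psiT T t - psiinf t)) \<le> BW"
    if T: "T \<ge> 1" for T
    unfolding BW_def
  proof (rule core_bound[where A = fu and p = phi and q = phih])
    show "1 \<le> T" by (rule T)
    have T0: "T > 0" using T by simp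
    have sub: "{0..T} \<subseteq> {0::real..}" by auto
    show "((\<lambda>t. psiT T t - psiinf t) has_vector_derivative
        (rT T t - transpose (fu t) *v (psiT T t - psiinf t))) (at t within {0..T})" if t: "t \<in> {0..T}" for t
    proof -
      have "((\<lambda>t. psiT T t - psiinf t) has_vector_derivative
          ((rT T t - transpose (fu t) *v psiT T t - Ju t) - (- (transpose (fu t) *v psiinf t) - Ju t))) (at t within {0..T})"
        by (rule has_vector_derivative_diff[OF lss_psi[OF T0 t]
              has_vector_derivative_within_subset[OF psiinf_ode sub]]) (use t in auto)
      then show ?thesis by (simp add: matrix_vector_mult_diff_distrib algebra_simps)
    qed
    show "(rT T has_vector_derivative
        (fu t *v rT T t + ((1 / alpha2) * ((psiT T t - psiinf t) \<bullet> phi n0 t)) *\<^sub>R phi n0 t)) (at t within {0..T})"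
      if t: "t \<in> {0..T}" for t
    proof -
      have t0: "t \<ge> 0" using t by simp
      have "psiT T t \<bullet> ft t + Jt t - Jbar = (psiT T t - psiinf t) \<bullet> phi n0 t"
        using C[OF t0] CJ phi_n0[OF t0] by (simp add: inner_diff_left)
      then show ?thesis using lss_r[OF T0 t] phi_n0[OF t0] by simp
    qed
    show "norm (fu t *v v) \<le> L * norm v" if "t \<in> {0..T}" for t v using fuL that by simp
    show "(phi i has_vector_derivative (fu t *v phi i t - lam i *\<^sub>R phi i t)) (at t within {0..T})"
      if "t \<in> {0..T}" for i t
      by (rule has_vector_derivative_within_subset[OF phi_ode sub]) (use that in auto)
    show "lam i \<noteq> 0" if "i \<noteq> n0" for i using lam_nz that .
    show "phi i t \<bullet> phih j t = (if i = j then 1 else 0)" if "t \<in> {0..T}" for i j t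
      using biorth that by simp
    show "cmin * (v \<bullet> v) \<le> (\<Sum>i\<in>UNIV. v $ i *\<^sub>R phih i t) \<bullet> (\<Sum>i\<in>UNIV. v $ i *\<^sub>R phih i t)"
      if "t \<in> {0..T}" for t v using gram_bounds that by simp
    show "(\<Sum>i\<in>UNIV. v $ i *\<^sub>R phih i t) \<bullet> (\<Sum>i\<in>UNIV. v $ i *\<^sub>R phih i t) \<le> cmax * (v \<bullet> v)"
      if "t \<in> {0..T}" for t v using gram_bounds that by simp
    show "0 < cmin" by (rule cmin_pos)
    show "cmin \<le> cmax" by (rule cmin_cmax)
    show "0 < alpha2" by (rule alpha_pos)
    show "0 \<le> L" by (rule L0)
    show "norm (psiT T 0 - psiinf 0) \<le> M" using lss_bc[OF T0] M[of 0] by simp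
    show "norm (psiT T T - psiinf T) \<le> M" using lss_bc[OF T0] M[of T] T0 by simp
  qed
  have M0: "0 \<le> M" using M[of 0] norm_ge_zero order_trans by blast
  define c0 where "c0 = 1 / (1 - exp (- 2 :: real))"
  define A0 where "A0 = 2 * M * c0"
  have c0p: "0 < c0" unfolding c0_def by simp
  have A00: "0 \<le> A0" unfolding A0_def using M0 c0p by simp
  have cT: "1 / (1 - exp (- 2 * T)) \<le> c0" if T: "T \<ge> 1" for T :: real
  proof -
    have "exp (- 2 * T) \<le> exp (- 2)" using T by simp
    moreover have "exp (- 2 :: real) < 1" by simp
    ultimately show ?thesis unfolding c0_def by (intro divide_left_mono) auto
  qed
  have eAB: "norm (eA psiinf T) \<le> A0 \<and> norm (eB psiinf T) \<le> A0" if T: "T \<ge> 1" for T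
  proof -
    have q0: "0 < 1 - exp (- 2 * T)" using T by simp
    have n: "norm (x - exp (- T) *\<^sub>R y) \<le> 2 * M" if "norm x \<le> M" "norm y \<le> M" for x y :: "real^'n"
    proof -
      have "norm (x - exp (- T) *\<^sub>R y) \<le> norm x + exp (- T) * norm y"
        using norm_triangle_ineq4[of x "exp (- T) *\<^sub>R y"] by simp
      also have "\<dots> \<le> M + 1 * M"
        using that T by (intro add_mono mult_mono) auto
      finally show ?thesis by simp
    qed
    have b: "(1 / (1 - exp (- 2 * T))) * (2 * M) \<le> A0"
    proof -
      have "(1 / (1 - exp (- 2 * T))) * (2 * M) \<le> c0 * (2 * M)"
        by (rule mult_right_mono[OF cT[OF T]]) (use M0 in simp)
      then show ?thesis unfolding A0_def by (simp add: mult_ac)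
    qed
    have "norm (eA psiinf T) = (1 / (1 - exp (- 2 * T))) * norm ((- psiinf 0) - exp (- T) *\<^sub>R (- psiinf T))"
      unfolding eA_def using q0 by simp
    also have "\<dots> \<le> (1 / (1 - exp (- 2 * T))) * (2 * M)"
      by (intro mult_left_mono n) (use M T q0 in auto)
    finally have 1: "norm (eA psiinf T) \<le> A0" using b by simp
    have "norm (eB psiinf T) = (1 / (1 - exp (- 2 * T))) * norm ((- psiinf T) - exp (- T) *\<^sub>R (- psiinf 0))"
      unfolding eB_def using q0 by simp
    also have "\<dots> \<le> (1 / (1 - exp (- 2 * T))) * (2 * M)"
      by (intro mult_left_mono n) (use M T q0 in auto)
    finally have 2: "norm (eB psiinf T) \<le> A0" using b by simp
    from 1 2 show ?thesis ..
  qed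
  have hint: "integral {0..T} (\<lambda>t. exp (- t) + exp (- (T - t))) \<le> 2" if T: "T \<ge> 0" for T :: real
  proof -
    have "((\<lambda>t. exp (- t) + exp (- (T - t))) has_integral
        ((- exp (- T) + exp (- (T - T))) - (- exp (- 0) + exp (- (T - 0))))) {0..T}"
    proof (rule fundamental_theorem_of_calculus[OF T])
      fix t assume "t \<in> {0..T}"
      show "((\<lambda>t. - exp (- t) + exp (- (T - t))) has_vector_derivative (exp (- t) + exp (- (T - t)))) (at t within {0..T})"
        unfolding has_real_derivative_iff_has_vector_derivative[symmetric]
        by (auto intro!: derivative_eq_intros)
    qed
    then have "integral {0..T} (\<lambda>t. exp (- t) + exp (- (T - t))) = 2 - 2 * exp (- T)"
      by (simp add: integral_unique)
    then show ?thesis by simp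
  qed
  have ep_c: "continuous_on {0..T} (ep psiinf T)" for T
    unfolding ep_def by (intro continuous_intros)
  have epn: "norm (ep psiinf T t) \<le> A0 * (exp (- t) + exp (- (T - t)))" if T: "T \<ge> 1" for T t
  proof -
    have "norm (ep psiinf T t) \<le> exp (- t) * norm (eA psiinf T) + exp (- (T - t)) * norm (eB psiinf T)"
      unfolding ep_def using norm_triangle_ineq[of "exp (- t) *\<^sub>R eA psiinf T" "exp (- (T - t)) *\<^sub>R eB psiinf T"]
      by simp
    also have "\<dots> \<le> exp (- t) * A0 + exp (- (T - t)) * A0"
      using eAB[OF T] by (intro add_mono mult_left_mono) auto
    finally show ?thesis by (simp add: algebra_simps)
  qed
  have ep1: "integral {0..T} (\<lambda>t. norm (ep psiinf T t)) \<le> 2 * A0" if T: "T \<ge> 1" for T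
  proof -
    have "integral {0..T} (\<lambda>t. norm (ep psiinf T t)) \<le> integral {0..T} (\<lambda>t. A0 * (exp (- t) + exp (- (T - t))))"
      by (rule integral_le) (use epn[OF T] ep_c in \<open>auto intro!: integrable_continuous_interval continuous_intros\<close>)
    also have "\<dots> = A0 * integral {0..T} (\<lambda>t. exp (- t) + exp (- (T - t)))" by simp
    also have "\<dots> \<le> A0 * 2" by (rule mult_left_mono[OF hint A00]) (use T in simp)
    finally show ?thesis by simp
  qed
  have ep2: "integral {0..T} (\<lambda>t. ep psiinf T t \<bullet> ep psiinf T t) \<le> 4 * A0^2" if T: "T \<ge> 1" for T
  proof -
    have "integral {0..T} (\<lambda>t. ep psiinf T t \<bullet> ep psiinf T t) \<le> integral {0..T} (\<lambda>t. 2 * A0^2 * (exp (- t) + exp (- (T - t))))"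
    proof (rule integral_le)
      show "(\<lambda>t. ep psiinf T t \<bullet> ep psiinf T t) integrable_on {0..T}"
        using ep_c by (intro integrable_continuous_interval continuous_intros)
      show "(\<lambda>t. 2 * A0^2 * (exp (- t) + exp (- (T - t)))) integrable_on {0..T}"
        by (intro integrable_continuous_interval continuous_intros)
      fix t assume t: "t \<in> {0..T}"
      define h where "h = exp (- t) + exp (- (T - t))"
      have h0: "0 \<le> h" unfolding h_def by simp
      have "exp (- t) \<le> 1" "exp (- (T - t)) \<le> 1" using t by auto
      then have h2: "h \<le> 2" unfolding h_def by linarith
      have "ep psiinf T t \<bullet> ep psiinf T t = (norm (ep psiinf T t))^2" by (simp add: power2_norm_eq_inner)
      also have "\<dots> \<le> (A0 * h)^2" unfolding h_def by (rule power_mono[OF epn[OF T]]) simp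
      also have "\<dots> = A0^2 * (h * h)" by (simp add: power2_eq_square)
      also have "\<dots> \<le> A0^2 * (2 * h)" by (rule mult_left_mono) (use h0 h2 in \<open>auto intro: mult_right_mono\<close>)
      finally show "ep psiinf T t \<bullet> ep psiinf T t \<le> 2 * A0^2 * (exp (- t) + exp (- (T - t)))"
        unfolding h_def by (simp add: algebra_simps)
    qed
    also have "\<dots> = 2 * A0^2 * integral {0..T} (\<lambda>t. exp (- t) + exp (- (T - t)))" by simp
    also have "\<dots> \<le> 2 * A0^2 * 2" by (rule mult_left_mono[OF hint]) (use T in simp_all)
    finally show ?thesis by simp
  qed
  have psiT_c: "continuous_on {0..T} (psiT T)" if "T > 0" for T
    by (rule continuous_on_vector_derivative) (use lss_psi[OF that] in auto)
  have psiinf_cT: "continuous_on {0..T} psiinf" for T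
    using psiinf_c by (rule continuous_on_subset) auto
  have eh_c: "continuous_on {0..T} (eh psiT psiinf T)" if "T > 0" for T
    unfolding eh_def using psiT_c[OF that] psiinf_cT ep_c by (intro continuous_intros)
  define BH where "BH = 2 * BW + 8 * A0^2"
  have ehB: "integral {0..T} (\<lambda>t. eh psiT psiinf T t \<bullet> eh psiT psiinf T t) \<le> BH" if T: "T \<ge> 1" for T
  proof -
    have T0: "T > 0" using T by simp
    let ?w = "\<lambda>t. psiT T t - psiinf t"
    have cw: "continuous_on {0..T} ?w" using psiT_c[OF T0] psiinf_cT by (intro continuous_intros)
    have "integral {0..T} (\<lambda>t. eh psiT psiinf T t \<bullet> eh psiT psiinf T t)
        \<le> integral {0..T} (\<lambda>t. 2 * (?w t \<bullet> ?w t) + 2 * (ep psiinf T t \<bullet> ep psiinf T t))"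
    proof (rule integral_le)
      show "(\<lambda>t. eh psiT psiinf T t \<bullet> eh psiT psiinf T t) integrable_on {0..T}"
        using eh_c[OF T0] by (intro integrable_continuous_interval continuous_intros)
      show "(\<lambda>t. 2 * (?w t \<bullet> ?w t) + 2 * (ep psiinf T t \<bullet> ep psiinf T t)) integrable_on {0..T}"
        using cw ep_c psiT_c[OF T0] psiinf_cT by (intro integrable_continuous_interval continuous_intros)
      fix t
      have e: "eh psiT psiinf T t = ?w t - ep psiinf T t" unfolding eh_def by simp
      have "0 \<le> (?w t + ep psiinf T t) \<bullet> (?w t + ep psiinf T t)" by simp
      then show "eh psiT psiinf T t \<bullet> eh psiT psiinf T t \<le> 2 * (?w t \<bullet> ?w t) + 2 * (ep psiinf T t \<bullet> ep psiinf T t)"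
        unfolding e by (simp add: inner_add_left inner_add_right inner_diff_left inner_diff_right inner_commute)
    qed
    also have "\<dots> = 2 * integral {0..T} (\<lambda>t. ?w t \<bullet> ?w t) + 2 * integral {0..T} (\<lambda>t. ep psiinf T t \<bullet> ep psiinf T t)"
      using cw ep_c psiT_c[OF T0] psiinf_cT by (subst integral_add) (auto intro!: integrable_continuous_interval continuous_intros)
    also have "\<dots> \<le> 2 * BW + 2 * (4 * A0^2)"
      using Wb[OF T] ep2[OF T] by linarith
    finally show ?thesis unfolding BH_def by simp
  qed
  have L2B: "L2norm T (eh psiT psiinf T) \<le> sqrt BH" if T: "T \<ge> 1" for T
    unfolding L2norm_def using ehB[OF T] by simp
  define Sf where "Sf = (SUP t\<in>{0..}. norm (fs t))"
  have fsb: "norm (fs t) \<le> Sf" if "t \<ge> 0" for t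
    unfolding Sf_def using fs_bdd that by (intro cSUP_upper) auto
  have Sf0: "0 \<le> Sf" using fsb[of 0] norm_ge_zero order_trans by blast
  define g where "g = (\<lambda>T. \<bar>(1 / T) * integral {0..T} (\<lambda>t. Js t + psiinf t \<bullet> fs t) - dJds\<bar>)"
  have ineq: "\<bar>(1 / T) * integral {0..T} (\<lambda>t. Js t + psiT T t \<bullet> fs t) - dJds\<bar>
      \<le> L2norm T (eh psiT psiinf T) * Sf / sqrt T + Sf * integral {0..T} (\<lambda>t. norm (ep psiinf T t)) / T + g T"
    if T: "T \<ge> 1" for T
  proof -
    have T0: "T > 0" using T by simp
    let ?eh = "eh psiT psiinf T" and ?ep = "ep psiinf T"
    have ceh: "continuous_on {0..T} ?eh" by (rule eh_c[OF T0])
    have cfs: "continuous_on {0..T} fs" by (rule fs_c)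
    have i1: "(\<lambda>t. Js t + psiT T t \<bullet> fs t) integrable_on {0..T}"
      using Js_c psiT_c[OF T0] cfs by (intro integrable_continuous_interval continuous_intros)
    have i2: "(\<lambda>t. Js t + psiinf t \<bullet> fs t) integrable_on {0..T}"
      using Js_c psiinf_cT cfs by (intro integrable_continuous_interval continuous_intros)
    have i3: "(\<lambda>t. ?eh t \<bullet> fs t) integrable_on {0..T}"
      using ceh cfs by (intro integrable_continuous_interval continuous_intros)
    have i4: "(\<lambda>t. ?ep t \<bullet> fs t) integrable_on {0..T}"
      using ep_c cfs by (intro integrable_continuous_interval continuous_intros)
    have "integral {0..T} (\<lambda>t. Js t + psiT T t \<bullet> fs t) - integral {0..T} (\<lambda>t. Js t + psiinf t \<bullet> fs t)
        = integral {0..T} (\<lambda>t. (Js t + psiT T t \<bullet> fs t) - (Js t + psiinf t \<bullet> fs t))"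
      using integral_diff[OF i1 i2] by simp
    also have "\<dots> = integral {0..T} (\<lambda>t. ?eh t \<bullet> fs t + ?ep t \<bullet> fs t)"
      by (rule integral_cong) (simp add: eh_def inner_diff_left)
    also have "\<dots> = integral {0..T} (\<lambda>t. ?eh t \<bullet> fs t) + integral {0..T} (\<lambda>t. ?ep t \<bullet> fs t)"
      using i3 i4 by (simp add: integral_add)
    finally have split: "integral {0..T} (\<lambda>t. Js t + psiT T t \<bullet> fs t) - integral {0..T} (\<lambda>t. Js t + psiinf t \<bullet> fs t)
        = integral {0..T} (\<lambda>t. ?eh t \<bullet> fs t) + integral {0..T} (\<lambda>t. ?ep t \<bullet> fs t)" .
    have neh: "(\<lambda>t. norm (?eh t)) integrable_on {0..T}"
      using ceh by (intro integrable_continuous_interval continuous_intros)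
    have nep: "(\<lambda>t. norm (?ep t)) integrable_on {0..T}"
      using ep_c by (intro integrable_continuous_interval continuous_intros)
    have b1: "\<bar>integral {0..T} (\<lambda>t. ?eh t \<bullet> fs t)\<bar> \<le> integral {0..T} (\<lambda>t. Sf * norm (?eh t))"
    proof -
      have "norm (integral {0..T} (\<lambda>t. ?eh t \<bullet> fs t)) \<le> integral {0..T} (\<lambda>t. Sf * norm (?eh t))"
      proof (rule integral_norm_bound_integral[OF i3])
        show "(\<lambda>t. Sf * norm (?eh t)) integrable_on {0..T}" using neh by (rule integrable_on_mult_right)
        fix t assume t: "t \<in> {0..T}"
        have "norm (?eh t \<bullet> fs t) \<le> norm (?eh t) * norm (fs t)"
          using Cauchy_Schwarz_ineq2 by simp
        also have "\<dots> \<le> norm (?eh t) * Sf" by (rule mult_left_mono[OF fsb]) (use t in auto)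
        finally show "norm (?eh t \<bullet> fs t) \<le> Sf * norm (?eh t)" by (simp add: mult.commute)
      qed
      then show ?thesis by simp
    qed
    have b2: "\<bar>integral {0..T} (\<lambda>t. ?ep t \<bullet> fs t)\<bar> \<le> integral {0..T} (\<lambda>t. Sf * norm (?ep t))"
    proof -
      have "norm (integral {0..T} (\<lambda>t. ?ep t \<bullet> fs t)) \<le> integral {0..T} (\<lambda>t. Sf * norm (?ep t))"
      proof (rule integral_norm_bound_integral[OF i4])
        show "(\<lambda>t. Sf * norm (?ep t)) integrable_on {0..T}" using nep by (rule integrable_on_mult_right)
        fix t assume t: "t \<in> {0..T}"
        have "norm (?ep t \<bullet> fs t) \<le> norm (?ep t) * norm (fs t)"
          using Cauchy_Schwarz_ineq2 by simp
        also have "\<dots> \<le> norm (?ep t) * Sf" by (rule mult_left_mono[OF fsb]) (use t in auto)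
        finally show "norm (?ep t \<bullet> fs t) \<le> Sf * norm (?ep t)" by (simp add: mult.commute)
      qed
      then show ?thesis by simp
    qed
    have cs: "integral {0..T} (\<lambda>t. norm (?eh t)) \<le> sqrt T * L2norm T ?eh"
    proof -
      have nn: "0 \<le> integral {0..T} (\<lambda>t. ?eh t \<bullet> ?eh t)"
        by (rule integral_nonneg) (use ceh in \<open>auto intro!: integrable_continuous_interval continuous_intros\<close>)
      have "(integral {0..T} (\<lambda>t. norm (?eh t)))^2 \<le> (T - 0) * integral {0..T} (\<lambda>t. (norm (?eh t))^2)"
        by (rule int_sq_le) (use T0 ceh in \<open>auto intro: continuous_intros\<close>)
      also have "\<dots> = (sqrt T * L2norm T ?eh)^2"
        unfolding L2norm_def using T0 nn
        by (simp add: power2_norm_eq_inner power_mult_distrib)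
      finally have "(integral {0..T} (\<lambda>t. norm (?eh t)))^2 \<le> (sqrt T * L2norm T ?eh)^2" .
      moreover have "0 \<le> sqrt T * L2norm T ?eh" unfolding L2norm_def using T0 nn by simp
      ultimately show ?thesis using power2_le_imp_le by blast
    qed
    have "\<bar>(1 / T) * integral {0..T} (\<lambda>t. Js t + psiT T t \<bullet> fs t) - dJds\<bar>
        = \<bar>((1 / T) * integral {0..T} (\<lambda>t. Js t + psiinf t \<bullet> fs t) - dJds)
           + (1 / T) * (integral {0..T} (\<lambda>t. ?eh t \<bullet> fs t) + integral {0..T} (\<lambda>t. ?ep t \<bullet> fs t))\<bar>"
      using split by (simp add: algebra_simps)
    also have "\<dots> \<le> g T + (1 / T) * (\<bar>integral {0..T} (\<lambda>t. ?eh t \<bullet> fs t)\<bar> + \<bar>integral {0..T} (\<lambda>t. ?ep t \<bullet> fs t)\<bar>)"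
    proof -
      let ?a = "(1 / T) * integral {0..T} (\<lambda>t. Js t + psiinf t \<bullet> fs t) - dJds"
      let ?b = "integral {0..T} (\<lambda>t. ?eh t \<bullet> fs t)" and ?c = "integral {0..T} (\<lambda>t. ?ep t \<bullet> fs t)"
      have "\<bar>?a + (1 / T) * (?b + ?c)\<bar> \<le> \<bar>?a\<bar> + \<bar>(1 / T) * (?b + ?c)\<bar>" by (rule abs_triangle_ineq)
      also have "\<bar>(1 / T) * (?b + ?c)\<bar> = (1 / T) * \<bar>?b + ?c\<bar>" using T0 by (simp add: abs_mult)
      also have "\<dots> \<le> (1 / T) * (\<bar>?b\<bar> + \<bar>?c\<bar>)" by (rule mult_left_mono[OF abs_triangle_ineq]) (use T0 in simp)
      finally show ?thesis unfolding g_def by simp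
    qed
    also have "\<dots> \<le> g T + (1 / T) * (Sf * (sqrt T * L2norm T ?eh) + Sf * integral {0..T} (\<lambda>t. norm (?ep t)))"
    proof -
      have "integral {0..T} (\<lambda>t. Sf * norm (?eh t)) \<le> Sf * (sqrt T * L2norm T ?eh)"
        using mult_left_mono[OF cs Sf0] by simp
      then show ?thesis using b1 b2 T0 by (intro add_left_mono mult_left_mono) auto
    qed
    also have "\<dots> = L2norm T ?eh * Sf / sqrt T + Sf * integral {0..T} (\<lambda>t. norm (?ep t)) / T + g T"
    proof -
      have "(1 / T) * (Sf * (sqrt T * L2norm T ?eh)) = L2norm T ?eh * Sf / sqrt T"
      proof -
        have sT: "0 < sqrt T" using T0 by simp
        have "T = sqrt T * sqrt T" using T0 by simp
        then have "(1 / T) * (Sf * (sqrt T * L2norm T ?eh)) = (1 / (sqrt T * sqrt T)) * (Sf * (sqrt T * L2norm T ?eh))"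
          by simp
        also have "\<dots> = L2norm T ?eh * Sf / sqrt T" using sT by (simp add: field_simps)
        finally show ?thesis .
      qed
      then show ?thesis by (simp add: algebra_simps)
    qed
    finally show ?thesis .
  qed
  have gO: "g \<in> O[at_top](\<lambda>T. 1 / sqrt T)" unfolding g_def by (rule shadow_rate)
  have P1: "\<forall>\<^sub>F T in at_top.
              \<bar>(1 / T) * integral {0..T} (\<lambda>t. Js t + psiT T t \<bullet> fs t) - dJds\<bar>
                \<le> L2norm T (eh psiT psiinf T) * (SUP t\<in>{0..}. norm (fs t)) / sqrt T
                   + (SUP t\<in>{0..}. norm (fs t)) * integral {0..T} (\<lambda>t. norm (ep psiinf T t)) / T
                   + g T"
    using eventually_ge_at_top[of "1::real"] by eventually_elim (use ineq in \<open>simp add: Sf_def\<close>)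
  have P2: "\<forall>\<^sub>F T in at_top. L2norm T (eh psiT psiinf T) \<le> sqrt BH"
    using eventually_ge_at_top[of "1::real"] by eventually_elim (rule L2B)
  have P3: "\<forall>\<^sub>F T in at_top. integral {0..T} (\<lambda>t. norm (ep psiinf T t)) \<le> 2 * A0"
    using eventually_ge_at_top[of "1::real"] by eventually_elim (rule ep1)
  obtain c where c0: "c > 0" and cg: "\<forall>\<^sub>F T in at_top. norm (g T) \<le> c * norm (1 / sqrt T)"
    using landau_o.bigE[OF gO] by blast
  have P4: "(\<lambda>T. \<bar>(1 / T) * integral {0..T} (\<lambda>t. Js t + psiT T t \<bullet> fs t) - dJds\<bar>)
           \<in> O[at_top](\<lambda>T. 1 / sqrt T)"
  proof (rule landau_o.bigI[of "\<bar>sqrt BH\<bar> * Sf + Sf * (2 * A0) + c"])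
    show "0 < \<bar>sqrt BH\<bar> * Sf + Sf * (2 * A0) + c" using c0 Sf0 A00 by (intro add_nonneg_pos add_nonneg_nonneg mult_nonneg_nonneg) auto
    show "\<forall>\<^sub>F T in at_top. norm \<bar>(1 / T) * integral {0..T} (\<lambda>t. Js t + psiT T t \<bullet> fs t) - dJds\<bar>
        \<le> (\<bar>sqrt BH\<bar> * Sf + Sf * (2 * A0) + c) * norm (1 / sqrt T)"
      using eventually_ge_at_top[of "1::real"] cg
    proof eventually_elim
      case (elim T)
      have T0: "T > 0" using elim by simp
      have sT: "1 \<le> sqrt T" using elim by simp
      have n1: "norm (1 / sqrt T) = 1 / sqrt T" using T0 by simp
      have gT: "g T \<le> c * (1 / sqrt T)" using elim(2) n1 by simp
      have a: "L2norm T (eh psiT psiinf T) * Sf / sqrt T \<le> \<bar>sqrt BH\<bar> * Sf * (1 / sqrt T)"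
      proof -
        have "L2norm T (eh psiT psiinf T) * Sf \<le> \<bar>sqrt BH\<bar> * Sf" by (rule mult_right_mono[OF order_trans[OF L2B[OF elim(1)] abs_ge_self] Sf0])
        then show ?thesis using T0 by (simp add: divide_right_mono)
      qed
      have b: "Sf * integral {0..T} (\<lambda>t. norm (ep psiinf T t)) / T \<le> Sf * (2 * A0) * (1 / sqrt T)"
      proof -
        have "Sf * integral {0..T} (\<lambda>t. norm (ep psiinf T t)) \<le> Sf * (2 * A0)"
          by (rule mult_left_mono[OF ep1[OF elim(1)] Sf0])
        then have "Sf * integral {0..T} (\<lambda>t. norm (ep psiinf T t)) / T \<le> Sf * (2 * A0) / T"
          using T0 by (simp add: divide_right_mono)
        also have "\<dots> \<le> Sf * (2 * A0) / sqrt T"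
        proof (rule divide_left_mono)
          have "sqrt T * 1 \<le> sqrt T * sqrt T" by (rule mult_left_mono[OF sT]) (use T0 in simp)
          then show "sqrt T \<le> T" using T0 by simp
        qed (use Sf0 A00 sT T0 in auto)
        finally show ?thesis by simp
      qed
      have "norm \<bar>(1 / T) * integral {0..T} (\<lambda>t. Js t + psiT T t \<bullet> fs t) - dJds\<bar>
          \<le> L2norm T (eh psiT psiinf T) * Sf / sqrt T + Sf * integral {0..T} (\<lambda>t. norm (ep psiinf T t)) / T + g T"
        using ineq[OF elim(1)] by simp
      also have "\<dots> \<le> \<bar>sqrt BH\<bar> * Sf * (1 / sqrt T) + Sf * (2 * A0) * (1 / sqrt T) + c * (1 / sqrt T)"
        using a b gT by linarith
      also have "\<dots> = (\<bar>sqrt BH\<bar> * Sf + Sf * (2 * A0) + c) * norm (1 / sqrt T)"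
        using n1 by (simp add: algebra_simps)
      finally show ?case .
    qed
  qed
  show ?thesis
    using gO P1 P2 P3 P4 by blast
qed

end
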